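(* Let $k \ge 1$ and let $V = L \sqcup R$ be a finite set of nails split into disjoint parts with $|L| = n_1$, $|R| = n_2$. Call an integer $j$ feasible if $\max(0, k - n_2) \le j \le \min(k, n_1)$. For a set $J$ of feasible indices define the function $f_J$ on subsets $S \subseteq V$ by $f_J(S) = \mathsf{fall}$ if there is $j \in J$ with $|S \cap L| \ge j$ and $|S \cap R| \ge k - j$, and $f_J(S) = \mathsf{hang}$ otherwise. Let $J_1, J_2$ be disjoint nonempty sets of feasible indices, and let $S \subseteq V$ satisfy $f_{J_1}(S) = f_{J_2}(S) = \mathsf{hang}$. Then there exists $S'$ with $S \subseteq S' \subseteq V$ and $f_{J_1}(S') \ne f_{J_2}(S')$.
   Context: Nails are elements of a finite set; the outcomes are $\mathsf{hang}$ and $\mathsf{fall}$. *)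

theory Defs
  imports Main
begin

datatype outcome = hang | fall

definition feasible :: "nat \<Rightarrow> nat \<Rightarrow> nat \<Rightarrow> int \<Rightarrow> bool" where
  "feasible k n1 n2 j \<longleftrightarrow> max 0 (int k - int n2) \<le> j \<and> j \<le> min (int k) (int n1)"

definition fJ :: "'a set \<Rightarrow> 'a set \<Rightarrow> nat \<Rightarrow> int set \<Rightarrow> 'a set \<Rightarrow> outcome" where
  "fJ L R k J S =
     (if \<exists>j\<in>J. int (card (S \<inter> L)) \<ge> j \<and> int (card (S \<inter> R)) \<ge> int k - j
      then fall else hang)"

end

theory Submission
  imports Defs
begin

lemma key:
  fixes J :: "int set" and a b k :: int
  assumes "finite J" "J \<noteq> {}" "\<forall>j\<in>J. \<not>(a \<ge> j \<and> b \<ge> k - j)"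
  shows "\<exists>j\<in>J. \<forall>j'\<in>J. j' \<le> max a j \<and> k - j' \<le> max b (k - j) \<longrightarrow> j' = j"
proof (cases "\<exists>j\<in>J. j \<le> a")
  case True
  define j where "j = Max {j\<in>J. j \<le> a}"
  have fin: "finite {j\<in>J. j \<le> a}" using assms(1) by simp
  have ne: "{j\<in>J. j \<le> a} \<noteq> {}" using True by auto
  have jin: "j \<in> {j\<in>J. j \<le> a}" unfolding j_def using Max_in[OF fin ne] .
  have jmax: "\<And>j'. j' \<in> J \<Longrightarrow> j' \<le> a \<Longrightarrow> j' \<le> j" unfolding j_def using fin by auto
  show ?thesis
  proof (rule bexI[of _ j], intro ballI impI)
    fix j' assume j': "j' \<in> J" "j' \<le> max a j \<and> k - j' \<le> max b (k - j)"
    have "max a j = a" using jin by auto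
    hence "j' \<le> a" using j' by simp
    hence "j' \<le> j" using jmax j' by simp
    moreover have "\<not> (b \<ge> k - j')" using assms(3) j' \<open>j' \<le> a\<close> by auto
    hence "k - j' \<le> k - j" using j' by (auto simp: max_def split: if_splits)
    ultimately show "j' = j" by simp
  qed (use jin in auto)
next
  case False
  define j where "j = Min J"
  have jin: "j \<in> J" unfolding j_def using Min_in[OF assms(1,2)] .
  have jmin: "\<And>j'. j' \<in> J \<Longrightarrow> j \<le> j'" unfolding j_def using assms(1) by auto
  show ?thesis
  proof (rule bexI[of _ j], intro ballI impI)
    fix j' assume j': "j' \<in> J" "j' \<le> max a j \<and> k - j' \<le> max b (k - j)"
    have "a < j" using False jin by auto
    hence "j' \<le> j" using j' by simp
    thus "j' = j" using jmin[OF j'(1)] by simp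
  qed (use jin in auto)
qed

lemma extend:
  assumes "finite A" "B \<subseteq> A" "card B \<le> n" "n \<le> card A"
  shows "\<exists>C. B \<subseteq> C \<and> C \<subseteq> A \<and> card C = n"
proof -
  have fB: "finite B" using assms(1,2) finite_subset by blast
  have "card (A - B) = card A - card B" using assms(1,2) fB card_Diff_subset by blast
  hence "n - card B \<le> card (A - B)" using assms by simp
  then obtain D where D: "D \<subseteq> A - B" "card D = n - card B"
    using obtain_subset_with_card_n by metis
  have "finite D" using D(1) assms(1) finite_subset by blast
  hence "card (B \<union> D) = card B + card D" using D(1) fB card_Un_disjoint by blast
  thus ?thesis using D assms by (intro exI[of _ "B \<union> D"]) auto
qed

theorem lemma3:
  fixes L R S :: "'a set" and k :: nat and J1 J2 :: "int set"
  assumes "k \<ge> 1"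
    and "finite L" and "finite R" and "L \<inter> R = {}"
    and "\<forall>j\<in>J1. feasible k (card L) (card R) j"
    and "\<forall>j\<in>J2. feasible k (card L) (card R) j"
    and "J1 \<inter> J2 = {}" and "J1 \<noteq> {}" and "J2 \<noteq> {}"
    and "S \<subseteq> L \<union> R"
    and "fJ L R k J1 S = hang" and "fJ L R k J2 S = hang"
  shows "\<exists>S'. S \<subseteq> S' \<and> S' \<subseteq> L \<union> R \<and> fJ L R k J1 S' \<noteq> fJ L R k J2 S'"
proof -
  define J where "J = J1 \<union> J2"
  define a where "a = int (card (S \<inter> L))"
  define b where "b = int (card (S \<inter> R))"
  have feas: "\<forall>j\<in>J. feasible k (card L) (card R) j" using assms(5,6) J_def by auto
  have "J \<subseteq> {0..int k}" using feas unfolding feasible_def by auto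
  hence finJ: "finite J" using finite_subset by blast
  have neJ: "J \<noteq> {}" using assms(8) J_def by auto
  have hangJ: "\<forall>j\<in>J. \<not>(a \<ge> j \<and> b \<ge> int k - j)"
    using assms(11,12) unfolding J_def a_def b_def fJ_def by (auto split: if_splits)
  obtain j where jJ: "j \<in> J" and juniq:
    "\<forall>j'\<in>J. j' \<le> max a j \<and> int k - j' \<le> max b (int k - j) \<longrightarrow> j' = j"
    using key[OF finJ neJ hangJ] by blast
  have fj: "0 \<le> j" "j \<le> int (card L)" "int k - j \<le> int (card R)" "j \<le> int k"
    using feas jJ unfolding feasible_def by auto
  have cL: "card (S \<inter> L) \<le> card L" using assms(2) by (simp add: card_mono)
  have cR: "card (S \<inter> R) \<le> card R" using assms(3) by (simp add: card_mono)
  have e1: "card (S \<inter> L) \<le> nat (max a j)" "nat (max a j) \<le> card L"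
    using cL fj a_def by auto
  have e2: "card (S \<inter> R) \<le> nat (max b (int k - j))" "nat (max b (int k - j)) \<le> card R"
    using cR fj b_def by auto
  obtain C1 where C1: "S \<inter> L \<subseteq> C1" "C1 \<subseteq> L" "card C1 = nat (max a j)"
    using extend[OF assms(2) _ e1] by blast
  obtain C2 where C2: "S \<inter> R \<subseteq> C2" "C2 \<subseteq> R" "card C2 = nat (max b (int k - j))"
    using extend[OF assms(3) _ e2] by blast
  define S' where "S' = C1 \<union> C2"
  have SL: "S' \<inter> L = C1" using C1 C2 assms(4) S'_def by auto
  have SR: "S' \<inter> R = C2" using C1 C2 assms(4) S'_def by auto
  have x: "int (card (S' \<inter> L)) = max a j" using SL C1(3) fj a_def by simp
  have y: "int (card (S' \<inter> R)) = max b (int k - j)" using SR C2(3) fj b_def by simp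
  have sub1: "S \<subseteq> S'" using assms(10) C1 C2 S'_def by auto
  have sub2: "S' \<subseteq> L \<union> R" using C1 C2 S'_def by auto
  have trig: "\<And>J'. J' \<subseteq> J \<Longrightarrow> fJ L R k J' S' = (if j \<in> J' then fall else hang)"
  proof -
    fix J' assume "J' \<subseteq> J"
    thus "fJ L R k J' S' = (if j \<in> J' then fall else hang)"
      unfolding fJ_def x y using juniq by (auto intro!: bexI[of _ j])
  qed
  have "fJ L R k J1 S' \<noteq> fJ L R k J2 S'"
    using trig[of J1] trig[of J2] J_def jJ assms(7) by auto
  thus ?thesis using sub1 sub2 by blast
qed

end
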